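(* Let $C_i\subseteq\mathbb F_q^{n_i}$ ($i\in[t]$) be classical codes and let $c\in C_1\boxplus\cdots\boxplus C_t$. For any two decompositions $c=c_1+\cdots+c_t=c_1'+\cdots+c_t'$ with $c_i,c_i'\in C^{(i)}$ for all $i\in[t]$, there exist $c_{i,j}\in C^{(i,j)}$ for $1\le i<j\le t$ such that for all $i\in[t]$, $$c_i-c_i'=\sum_{j=1}^{i-1}c_{j,i}-\sum_{j=i+1}^{t}c_{i,j}.$$
   Context: Identify $\mathbb F_q^{n_1}\otimes\cdots\otimes\mathbb F_q^{n_t}$ with $t$-dimensional arrays; a direction-$i$ column is the vector in $\mathbb F_q^{n_i}$ obtained by fixing all coordinates except the $i$-th. $C^{(i)}=\mathbb F_q^{n_1}\otimes\cdots\otimes C_i\otimes\cdots\otimes\mathbb F_q^{n_t}$ is the space of arrays all of whose direction-$i$ columns lie in $C_i$; $C^{(i,j)}=C^{(i)}\cap C^{(j)}$; $C_1\boxplus\cdots\boxplus C_t=C^{(1)}+\cdots+C^{(t)}$. *)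

theory Defs
  imports Main "HOL-Library.Function_Algebras"
begin

text \<open>Tensor-product arrays in F^{n_0} (x) ... (x) F^{n_{t-1}} (directions indexed 0..t-1).\<close>

definition idx_box :: "nat \<Rightarrow> (nat \<Rightarrow> nat) \<Rightarrow> (nat \<Rightarrow> nat) set" where
  "idx_box t n = {x. (\<forall>k<t. x k < n k) \<and> (\<forall>k. t \<le> k \<longrightarrow> x k = 0)}"

definition arrays :: "nat \<Rightarrow> (nat \<Rightarrow> nat) \<Rightarrow> ((nat \<Rightarrow> nat) \<Rightarrow> 'a::zero) set" where
  "arrays t n = {A. \<forall>x. x \<notin> idx_box t n \<longrightarrow> A x = 0}"

definition vecs :: "nat \<Rightarrow> (nat \<Rightarrow> 'a::zero) set" where
  "vecs m = {v. \<forall>j. m \<le> j \<longrightarrow> v j = 0}"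

definition lin_code :: "nat \<Rightarrow> (nat \<Rightarrow> 'a::field) set \<Rightarrow> bool" where
  "lin_code m C \<longleftrightarrow> C \<subseteq> vecs m \<and> 0 \<in> C \<and>
     (\<forall>u\<in>C. \<forall>v\<in>C. u + v \<in> C) \<and> (\<forall>a. \<forall>u\<in>C. (\<lambda>j. a * u j) \<in> C)"

definition col :: "(nat \<Rightarrow> nat) \<Rightarrow> ((nat \<Rightarrow> nat) \<Rightarrow> 'a::zero) \<Rightarrow> nat \<Rightarrow> (nat \<Rightarrow> nat) \<Rightarrow> (nat \<Rightarrow> 'a)" where
  "col n A i x = (\<lambda>j. if j < n i then A (x(i := j)) else 0)"

definition Cdir :: "nat \<Rightarrow> (nat \<Rightarrow> nat) \<Rightarrow> (nat \<Rightarrow> (nat \<Rightarrow> 'a::zero) set) \<Rightarrow> nat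
    \<Rightarrow> ((nat \<Rightarrow> nat) \<Rightarrow> 'a) set" where
  "Cdir t n C i = {A \<in> arrays t n. \<forall>x\<in>idx_box t n. col n A i x \<in> C i}"

definition Cpair :: "nat \<Rightarrow> (nat \<Rightarrow> nat) \<Rightarrow> (nat \<Rightarrow> (nat \<Rightarrow> 'a::zero) set) \<Rightarrow> nat \<Rightarrow> nat
    \<Rightarrow> ((nat \<Rightarrow> nat) \<Rightarrow> 'a) set" where
  "Cpair t n C i j = Cdir t n C i \<inter> Cdir t n C j"

definition boxplus :: "nat \<Rightarrow> (nat \<Rightarrow> nat) \<Rightarrow> (nat \<Rightarrow> (nat \<Rightarrow> 'a::comm_monoid_add) set)
    \<Rightarrow> ((nat \<Rightarrow> nat) \<Rightarrow> 'a) set" where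
  "boxplus t n C = {\<Sum>i<t. a i | a. \<forall>i<t. a i \<in> Cdir t n C i}"

end

theory Submission imports Defs "HOL.Vector_Spaces" begin

definition sc :: "'a::field \<Rightarrow> (nat \<Rightarrow> 'a) \<Rightarrow> (nat \<Rightarrow> 'a)" where "sc a v = (\<lambda>j. a * v j)"

interpretation fv: vector_space "sc :: 'a::field \<Rightarrow> _"
  by unfold_locales (auto simp: sc_def algebra_simps fun_eq_iff)

interpretation fvp: vector_space_pair "sc::'a::field\<Rightarrow>_" "sc::'a\<Rightarrow>_" ..

lemma lin_code_subspace: "lin_code m C \<Longrightarrow> fv.subspace C"
  unfolding lin_code_def fv.subspace_def sc_def by auto

lemma proj_fun:
  assumes "lin_code m (C :: (nat \<Rightarrow> 'a::field) set)"
  shows "\<exists>P. Vector_Spaces.linear sc sc P \<and> (\<forall>v. P v \<in> C) \<and> (\<forall>v\<in>C. P v = v)"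
proof -
  have sub: "fv.subspace C" using assms by (rule lin_code_subspace)
  obtain B where B: "B \<subseteq> C" "fv.independent B" "C \<subseteq> fv.span B"
    using fv.maximal_independent_subset by blast
  have spB: "fv.span B = C"
    using B sub by (metis fv.span_minimal subset_antisym)
  define P where "P = fvp.construct B id"
  have lin: "Vector_Spaces.linear sc sc P" unfolding P_def by (rule fvp.linear_construct[OF B(2)])
  have "P v \<in> C" for v
    using fvp.construct_in_span[OF B(2), of id v] spB unfolding P_def by simp
  moreover have "P v = v" if "v \<in> C" for v
  proof -
    have "P v = id v"
      by (rule fvp.linear_eq_on[OF lin]) (use that spB fvp.construct_basis[OF B(2)] in \<open>auto simp: P_def fv.linear_id fv.linear_ident\<close>)
    then show ?thesis by simp
  qed
  ultimately show ?thesis using lin by blast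
qed

lemma sum_apply_fun: "(sum f S) x = sum (\<lambda>i. f i x) S"
  by (induction S rule: infinite_finite_induct) auto

definition ee :: "nat \<Rightarrow> nat \<Rightarrow> 'a::field" where "ee l = (\<lambda>k. if k = l then 1 else 0)"

definition mv :: "(nat \<Rightarrow> nat \<Rightarrow> 'a::field) \<Rightarrow> nat \<Rightarrow> (nat \<Rightarrow> 'a) \<Rightarrow> (nat \<Rightarrow> 'a)" where
  "mv M m v = (\<lambda>i. if i < m then (\<Sum>l<m. M i l * v l) else 0)"

lemma vec_expand: "v \<in> vecs m \<Longrightarrow> v = (\<Sum>l<m. sc (v l) (ee l))"
proof (rule ext)
  fix k assume v: "v \<in> vecs m"
  have "(\<Sum>l<m. sc (v l) (ee l)) k = (\<Sum>l<m. v l * (if k = l then 1 else 0))"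
    by (simp add: sum_apply_fun sc_def ee_def)
  also have "\<dots> = (\<Sum>l<m. if k = l then v l else 0)" by (rule sum.cong) auto
  also have "\<dots> = v k" using v by (auto simp: vecs_def)
  finally show "v k = (\<Sum>l<m. sc (v l) (ee l)) k" by simp
qed

lemma lin_code_sum: "lin_code m C \<Longrightarrow> (\<forall>l\<in>S. f l \<in> C) \<Longrightarrow> sum f S \<in> C"
proof (induction S rule: infinite_finite_induct)
  case (infinite A) then show ?case unfolding lin_code_def by (metis sum.infinite)
next
  case empty then show ?case unfolding lin_code_def by (metis sum.empty)
next
  case (insert x F)
  then have "sum f (insert x F) = f x + sum f F" by (intro sum.insert)
  moreover have "f x + sum f F \<in> C"
  proof -
    have fx: "f x \<in> C" and sF: "sum f F \<in> C" using insert by auto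
    have "\<forall>u\<in>C. \<forall>v\<in>C. u + v \<in> C" using insert.prems(1) unfolding lin_code_def by blast
    then show ?thesis using fx sF by blast
  qed
  ultimately show ?case by metis
qed

lemma proj_mat:
  assumes lc: "lin_code m (C :: (nat \<Rightarrow> 'a::field) set)"
  shows "\<exists>M. (\<forall>v\<in>vecs m. mv M m v \<in> C) \<and> (\<forall>v\<in>C. mv M m v = v)"
proof -
  obtain P where lin: "Vector_Spaces.linear sc sc P" and PC: "\<forall>v. P v \<in> C" and Pid: "\<forall>v\<in>C. P v = v"
    using proj_fun[OF lc] by blast
  have mh: "module_hom sc sc P" using lin by (rule module_hom_linearI)
  define M where "M i l = P (ee l) i" for i l
  have key: "mv M m v = P v" if v: "v \<in> vecs m" for v
  proof (rule ext)
    fix i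
    have "P v = P (\<Sum>l<m. sc (v l) (ee l))" using vec_expand[OF v] by simp
    also have "\<dots> = (\<Sum>l<m. sc (v l) (P (ee l)))"
      by (simp add: module_hom.sum[OF mh] module_hom.scale[OF mh])
    finally have Pv: "P v i = (\<Sum>l<m. v l * M i l)"
      by (simp add: sum_apply_fun sc_def M_def)
    have "P v \<in> vecs m" using PC lc by (auto simp: lin_code_def)
    then show "mv M m v i = P v i"
    proof (cases "i < m")
      case True then show ?thesis by (simp add: mv_def Pv mult.commute)
    next
      case False
      then have "P v i = 0" using \<open>P v \<in> vecs m\<close> by (simp add: vecs_def)
      then show ?thesis using False by (simp add: mv_def)
    qed
  qed
  have "\<forall>v\<in>vecs m. mv M m v \<in> C" using key PC by simp
  moreover have "\<forall>v\<in>C. mv M m v = v" using key Pid lc by (auto simp: lin_code_def)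
  ultimately show ?thesis by blast
qed

definition aproj :: "nat \<Rightarrow> (nat\<Rightarrow>nat) \<Rightarrow> (nat \<Rightarrow> nat \<Rightarrow> 'a::field) \<Rightarrow> nat \<Rightarrow> ((nat\<Rightarrow>nat)\<Rightarrow>'a) \<Rightarrow> ((nat\<Rightarrow>nat)\<Rightarrow>'a)" where
  "aproj t n M m A = (\<lambda>x. if x \<in> idx_box t n then (\<Sum>l<n m. M (x m) l * A (x(m:=l))) else 0)"

lemma box_upd: "x \<in> idx_box t n \<Longrightarrow> m < t \<Longrightarrow> j < n m \<Longrightarrow> x(m:=j) \<in> idx_box t n"
  by (auto simp: idx_box_def)

lemma col_upd: "col n A m (x(m:=j)) = col n A m x"
  unfolding col_def by (simp only: fun_upd_upd)

lemma col_vecs: "col n A m x \<in> vecs (n m)"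
  by (simp add: col_def vecs_def)

lemma aproj_mv: "x \<in> idx_box t n \<Longrightarrow> m < t \<Longrightarrow> aproj t n M m A x = mv M (n m) (col n A m x) (x m)"
  by (auto simp: aproj_def mv_def col_def idx_box_def intro!: sum.cong)

lemma aproj_in:
  assumes m: "m < t" and MP: "\<forall>v\<in>vecs (n m). mv M (n m) v \<in> C m"
  shows "aproj t n M m A \<in> Cdir t n C m"
  unfolding Cdir_def
proof (intro CollectI conjI ballI)
  show "aproj t n M m A \<in> arrays t n" by (simp add: arrays_def aproj_def)
  fix y assume y: "y \<in> idx_box t n"
  have "col n (aproj t n M m A) m y = mv M (n m) (col n A m y)"
  proof (rule ext)
    fix j show "col n (aproj t n M m A) m y j = mv M (n m) (col n A m y) j"
    proof (cases "j < n m")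
      case True
      have "aproj t n M m A (y(m:=j)) = mv M (n m) (col n A m (y(m:=j))) ((y(m:=j)) m)"
        by (rule aproj_mv[OF box_upd[OF y m True] m])
      then show ?thesis using True by (simp add: col_def[of n "aproj t n M m A"] col_upd)
    next
      case False then show ?thesis by (simp add: col_def mv_def)
    qed
  qed
  then show "col n (aproj t n M m A) m y \<in> C m" using MP col_vecs by metis
qed

lemma aproj_id:
  assumes m: "m < t" and MP: "\<forall>v\<in>C m. mv M (n m) v = v" and A: "A \<in> Cdir t n C m"
  shows "aproj t n M m A = A"
proof (rule ext)
  fix x show "aproj t n M m A x = A x"
  proof (cases "x \<in> idx_box t n")
    case True
    have "col n A m x \<in> C m" using A True by (auto simp: Cdir_def)
    then have "aproj t n M m A x = col n A m x (x m)" using aproj_mv[OF True m, of M A] MP by simp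
    also have "\<dots> = A x" using True m by (auto simp: col_def idx_box_def)
    finally show ?thesis .
  next
    case False then show ?thesis using A by (auto simp: aproj_def Cdir_def arrays_def)
  qed
qed

lemma aproj_sum: "aproj t n M m (sum f S) = (\<Sum>j\<in>S. aproj t n M m (f j))"
  by (rule ext) (auto simp: aproj_def sum_apply_fun sum_distrib_left intro: sum.swap)

lemma aproj_neg: "aproj t n M m (- A) = - aproj t n M m A"
  by (rule ext) (auto simp: aproj_def sum_negf)

lemma aproj_pres:
  assumes m: "m < t" and j: "j < t" and jm: "j \<noteq> m" and lc: "lin_code (n j) (C j)"
    and A: "A \<in> Cdir t n C j"
  shows "aproj t n M m A \<in> Cdir t n C j"
  unfolding Cdir_def
proof (intro CollectI conjI ballI)
  show "aproj t n M m A \<in> arrays t n" by (simp add: arrays_def aproj_def)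
  fix y assume y: "y \<in> idx_box t n"
  have eq: "col n (aproj t n M m A) j y = (\<Sum>l<n m. sc (M (y m) l) (col n A j (y(m:=l))))"
  proof (rule ext)
    fix k
    show "col n (aproj t n M m A) j y k = (\<Sum>l<n m. sc (M (y m) l) (col n A j (y(m:=l)))) k"
    proof (cases "k < n j")
      case True
      have b: "y(j:=k) \<in> idx_box t n" using box_upd[OF y j True] .
      show ?thesis using True b jm
        by (simp add: col_def aproj_def sum_apply_fun sc_def fun_upd_twist)
    next
      case False then show ?thesis by (simp add: col_def sum_apply_fun sc_def)
    qed
  qed
  have "\<forall>l\<in>{..<n m}. sc (M (y m) l) (col n A j (y(m:=l))) \<in> C j"
  proof
    fix l assume "l \<in> {..<n m}"
    then have "y(m:=l) \<in> idx_box t n" using box_upd[OF y m] by simp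
    then have "col n A j (y(m:=l)) \<in> C j" using A by (auto simp: Cdir_def)
    then show "sc (M (y m) l) (col n A j (y(m:=l))) \<in> C j" using lc by (simp add: lin_code_def sc_def)
  qed
  then show "col n (aproj t n M m A) j y \<in> C j" unfolding eq by (rule lin_code_sum[OF lc])
qed

lemma Cdir_diff:
  assumes lc: "lin_code (n j) (C j)" and A: "A \<in> Cdir t n C j" and B: "B \<in> Cdir t n C j"
  shows "A - B \<in> Cdir t n C j"
  unfolding Cdir_def
proof (intro CollectI conjI ballI)
  show "A - B \<in> arrays t n" using A B by (auto simp: arrays_def Cdir_def)
  fix x assume x: "x \<in> idx_box t n"
  have "col n A j x \<in> C j" "col n B j x \<in> C j" using A B x by (auto simp: Cdir_def)
  then have "col n A j x + (\<lambda>k. (-1) * col n B j x k) \<in> C j" using lc unfolding lin_code_def by blast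
  moreover have "col n (A - B) j x = col n A j x + (\<lambda>k. (-1) * col n B j x k)"
    by (auto simp: col_def)
  ultimately show "col n (A - B) j x \<in> C j" by simp
qed


lemma decomp_abs:
  fixes D :: "nat \<Rightarrow> 'b::ab_group_add set" and P :: "nat \<Rightarrow> 'b \<Rightarrow> 'b"
  assumes P_in: "\<And>m A. m < t \<Longrightarrow> P m A \<in> D m"
    and P_id: "\<And>m A. m < t \<Longrightarrow> A \<in> D m \<Longrightarrow> P m A = A"
    and P_sum: "\<And>m (f::nat\<Rightarrow>'b) S. m < t \<Longrightarrow> P m (sum f S) = (\<Sum>j\<in>S. P m (f j))"
    and P_neg: "\<And>m A. m < t \<Longrightarrow> P m (- A) = - P m A"
    and P_pres: "\<And>m j A. m < t \<Longrightarrow> j < t \<Longrightarrow> j \<noteq> m \<Longrightarrow> A \<in> D j \<Longrightarrow> P m A \<in> D j"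
    and D_diff: "\<And>j A B. j < t \<Longrightarrow> A \<in> D j \<Longrightarrow> B \<in> D j \<Longrightarrow> A - B \<in> D j"
    and k: "k \<le> t"
  shows "\<forall>d. (\<forall>i\<in>{k..<t}. d i \<in> D i) \<and> sum d {k..<t} = 0 \<longrightarrow>
     (\<exists>cc. (\<forall>i j. k \<le> i \<and> i < j \<and> j < t \<longrightarrow> cc i j \<in> D i \<inter> D j) \<and>
       (\<forall>i\<in>{k..<t}. d i = (\<Sum>j\<in>{k..<i}. cc j i) - (\<Sum>j\<in>{i<..<t}. cc i j)))"
  using k
proof (induction k rule: inc_induct)
  case base
  then show ?case by auto
next
  case (step k)
  show ?case
  proof (intro allI impI)
    fix d assume H: "(\<forall>i\<in>{k..<t}. d i \<in> D i) \<and> sum d {k..<t} = 0"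
    have kt: "k < t" using step by simp
    have split: "{k..<t} = insert k {Suc k..<t}" using kt by auto
    have sum0: "d k + sum d {Suc k..<t} = 0" using H split by simp
    define cm where "cm j = P k (d j)" for j
    define d' where "d' j = d j - cm j" for j
    have sumcm: "sum cm {Suc k..<t} = - d k"
    proof -
      have "sum cm {Suc k..<t} = P k (sum d {Suc k..<t})" unfolding cm_def by (rule P_sum[OF kt, symmetric])
      also have "sum d {Suc k..<t} = - d k" using sum0 by (simp add: add_eq_0_iff)
      also have "P k (- d k) = - d k" using P_neg[OF kt] P_id[OF kt] H kt by simp
      finally show ?thesis .
    qed
    have d'mem: "\<forall>i\<in>{Suc k..<t}. d' i \<in> D i"
      using H P_pres[OF kt] D_diff by (auto simp: d'_def cm_def)
    have d'sum: "sum d' {Suc k..<t} = 0"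
      using sum0 sumcm by (simp add: d'_def sum_subtractf add_eq_0_iff)
    obtain cc' where cc'1: "\<forall>i j. Suc k \<le> i \<and> i < j \<and> j < t \<longrightarrow> cc' i j \<in> D i \<inter> D j"
      and cc'2: "\<forall>i\<in>{Suc k..<t}. d' i = (\<Sum>j\<in>{Suc k..<i}. cc' j i) - (\<Sum>j\<in>{i<..<t}. cc' i j)"
      using step.IH d'mem d'sum by blast
    define cc where "cc i j = (if i = k then cm j else cc' i j)" for i j
    have "\<forall>i j. k \<le> i \<and> i < j \<and> j < t \<longrightarrow> cc i j \<in> D i \<inter> D j"
    proof (intro allI impI)
      fix i j assume a: "k \<le> i \<and> i < j \<and> j < t"
      show "cc i j \<in> D i \<inter> D j"
      proof (cases "i = k")
        case True
        then show ?thesis using a P_in[OF kt] P_pres[OF kt] H by (auto simp: cc_def cm_def)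
      next
        case False then show ?thesis using a cc'1 by (auto simp: cc_def)
      qed
    qed
    moreover have "\<forall>i\<in>{k..<t}. d i = (\<Sum>j\<in>{k..<i}. cc j i) - (\<Sum>j\<in>{i<..<t}. cc i j)"
    proof
      fix i assume i: "i \<in> {k..<t}"
      show "d i = (\<Sum>j\<in>{k..<i}. cc j i) - (\<Sum>j\<in>{i<..<t}. cc i j)"
      proof (cases "i = k")
        case True
        have "{k<..<t} = {Suc k..<t}" by auto
        then have "(\<Sum>j\<in>{i<..<t}. cc i j) = sum cm {Suc k..<t}" using True by (simp add: cc_def)
        then show ?thesis using True sumcm by simp
      next
        case False
        then have i2: "i \<in> {Suc k..<t}" using i by auto
        have s1: "(\<Sum>j\<in>{k..<i}. cc j i) = cm i + (\<Sum>j\<in>{Suc k..<i}. cc' j i)"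
        proof -
          have "{k..<i} = insert k {Suc k..<i}" using i2 by auto
          then have "(\<Sum>j\<in>{k..<i}. cc j i) = cc k i + (\<Sum>j\<in>{Suc k..<i}. cc j i)" by simp
          also have "(\<Sum>j\<in>{Suc k..<i}. cc j i) = (\<Sum>j\<in>{Suc k..<i}. cc' j i)"
            by (rule sum.cong) (auto simp: cc_def)
          finally show ?thesis by (simp add: cc_def)
        qed
        have s2: "(\<Sum>j\<in>{i<..<t}. cc i j) = (\<Sum>j\<in>{i<..<t}. cc' i j)"
          using False by (simp add: cc_def)
        have "d i = cm i + d' i" by (simp add: d'_def)
        then show ?thesis using cc'2 i2 s1 s2 by (simp add: algebra_simps)
      qed
    qed
    ultimately show "\<exists>cc. (\<forall>i j. k \<le> i \<and> i < j \<and> j < t \<longrightarrow> cc i j \<in> D i \<inter> D j) \<and>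
       (\<forall>i\<in>{k..<t}. d i = (\<Sum>j\<in>{k..<i}. cc j i) - (\<Sum>j\<in>{i<..<t}. cc i j))" by blast
  qed
qed

theorem lemma3p1:
  fixes t :: nat and n :: "nat \<Rightarrow> nat"
    and C :: "nat \<Rightarrow> (nat \<Rightarrow> 'a::{finite,field}) set"
    and c :: "(nat \<Rightarrow> nat) \<Rightarrow> 'a"
    and cs cs' :: "nat \<Rightarrow> (nat \<Rightarrow> nat) \<Rightarrow> 'a"
  assumes codes: "\<forall>i<t. lin_code (n i) (C i)"
    and c_in: "c \<in> boxplus t n C"
    and dec1: "c = (\<Sum>i<t. cs i)" and mem1: "\<forall>i<t. cs i \<in> Cdir t n C i"
    and dec2: "c = (\<Sum>i<t. cs' i)" and mem2: "\<forall>i<t. cs' i \<in> Cdir t n C i"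
  shows "\<exists>cc :: nat \<Rightarrow> nat \<Rightarrow> (nat \<Rightarrow> nat) \<Rightarrow> 'a.
           (\<forall>i j. i < j \<and> j < t \<longrightarrow> cc i j \<in> Cpair t n C i j) \<and>
           (\<forall>i<t. cs i - cs' i = (\<Sum>j<i. cc j i) - (\<Sum>j\<in>{i<..<t}. cc i j))"
proof -
  have "\<forall>m<t. \<exists>M. (\<forall>v\<in>vecs (n m). mv M (n m) v \<in> C m) \<and> (\<forall>v\<in>C m. mv M (n m) v = v)"
    using codes proj_mat by blast
  then obtain MM where MM: "\<And>m. m < t \<Longrightarrow> (\<forall>v\<in>vecs (n m). mv (MM m) (n m) v \<in> C m) \<and> (\<forall>v\<in>C m. mv (MM m) (n m) v = v)"
    by metis
  define P where "P m = aproj t n (MM m) m" for m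
  define d where "d i = cs i - cs' i" for i
  have dsum: "sum d {0..<t} = 0"
    using dec1 dec2 by (simp add: d_def sum_subtractf atLeast0LessThan)
  have dmem: "\<forall>i\<in>{0..<t}. d i \<in> Cdir t n C i"
    using mem1 mem2 codes by (auto simp: d_def intro!: Cdir_diff)
  have "\<forall>d. (\<forall>i\<in>{0..<t}. d i \<in> Cdir t n C i) \<and> sum d {0..<t} = 0 \<longrightarrow>
     (\<exists>cc. (\<forall>i j. 0 \<le> i \<and> i < j \<and> j < t \<longrightarrow> cc i j \<in> Cdir t n C i \<inter> Cdir t n C j) \<and>
       (\<forall>i\<in>{0..<t}. d i = (\<Sum>j\<in>{0..<i}. cc j i) - (\<Sum>j\<in>{i<..<t}. cc i j)))"
  proof (rule decomp_abs[where P = P])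
    show "\<And>m A. m < t \<Longrightarrow> P m A \<in> Cdir t n C m"
      unfolding P_def using MM by (intro aproj_in) auto
    show "\<And>m A. m < t \<Longrightarrow> A \<in> Cdir t n C m \<Longrightarrow> P m A = A"
      unfolding P_def using MM by (intro aproj_id) auto
    show "\<And>m f S. m < t \<Longrightarrow> P m (sum f S) = (\<Sum>j\<in>S. P m (f j))"
      unfolding P_def by (rule aproj_sum)
    show "\<And>m A. m < t \<Longrightarrow> P m (- A) = - P m A"
      unfolding P_def by (rule aproj_neg)
    show "\<And>m j A. m < t \<Longrightarrow> j < t \<Longrightarrow> j \<noteq> m \<Longrightarrow> A \<in> Cdir t n C j \<Longrightarrow> P m A \<in> Cdir t n C j"
      unfolding P_def using codes by (intro aproj_pres) auto
    show "\<And>j A B. j < t \<Longrightarrow> A \<in> Cdir t n C j \<Longrightarrow> B \<in> Cdir t n C j \<Longrightarrow> A - B \<in> Cdir t n C j"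
      using codes by (intro Cdir_diff) auto
  qed simp
  note all = this
  have ex: "\<exists>cc. (\<forall>i j. 0 \<le> i \<and> i < j \<and> j < t \<longrightarrow> cc i j \<in> Cdir t n C i \<inter> Cdir t n C j) \<and>
       (\<forall>i\<in>{0..<t}. d i = (\<Sum>j\<in>{0..<i}. cc j i) - (\<Sum>j\<in>{i<..<t}. cc i j))"
    by (rule mp[OF spec[OF all, of d]]) (use dsum dmem in blast)
  then obtain cc where cc1: "\<forall>i j. 0 \<le> i \<and> i < j \<and> j < t \<longrightarrow> cc i j \<in> Cdir t n C i \<inter> Cdir t n C j"
    and cc2: "\<forall>i\<in>{0..<t}. d i = (\<Sum>j\<in>{0..<i}. cc j i) - (\<Sum>j\<in>{i<..<t}. cc i j)"
    by (elim exE conjE)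
  have r1: "\<forall>i j. i < j \<and> j < t \<longrightarrow> cc i j \<in> Cpair t n C i j"
    using cc1 unfolding Cpair_def by simp
  have r2: "\<forall>i<t. cs i - cs' i = (\<Sum>j<i. cc j i) - (\<Sum>j\<in>{i<..<t}. cc i j)"
  proof (intro allI impI)
    fix i assume "i < t"
    then have "d i = (\<Sum>j\<in>{0..<i}. cc j i) - (\<Sum>j\<in>{i<..<t}. cc i j)" using cc2 by simp
    then show "cs i - cs' i = (\<Sum>j<i. cc j i) - (\<Sum>j\<in>{i<..<t}. cc i j)"
      by (simp only: d_def atLeast0LessThan)
  qed
  show ?thesis using r1 r2 by blast
qed

end
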